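(* Let $q$ be a prime power, $e\in\{0,1,2\}$, $r$ an integer ($r$ odd if $e\in\{0,2\}$, $r$ even if $e=1$), $N=q^{\frac{r+e+1}{2}}$, and let $\{\Sigma_1,\dots,\Sigma_{N+1}\}$ be a spread of a non-degenerate quadric $\mathcal Q_{r+2,e}$ of ${\rm PG}(r+2,q)$ with associated polarity $\perp$. Fix a point $P\in\Sigma_{N+1}$ and an $r$-space $H\subset P^\perp$ with $P\notin H$. Put $\mathcal Q_{r,e}=H\cap\mathcal Q_{r+2,e}$ and $\Pi_i=\langle P,\Sigma_i\rangle\cap H$ for $i=1,\dots,N$. Then: (i) if $e\in\{1,2\}$, then for $i\neq j$ the subspaces $\Pi_i$ and $\Pi_j$ meet in at most one point; (ii) if $e=0$ and $r\equiv 1\pmod 4$, then for $i\neq j$ the subspaces $\Pi_i$ and $\Pi_j$ have exactly one point in common; (iii) each point of $\mathcal Q_{r,e}\setminus\Sigma_{N+1}$ lies in exactly $q$ of the subspaces $\Pi_1,\dots,\Pi_N$.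
   Context: Notation: $\mathcal Q_{m,e}$ denotes a non-degenerate quadric of ${\rm PG}(m,q)$ which is hyperbolic $\mathcal Q^+(m,q)$ if $e=0$ ($m$ odd), parabolic $\mathcal Q(m,q)$ if $e=1$ ($m$ even), elliptic $\mathcal Q^-(m,q)$ if $e=2$ ($m$ odd). The polarity $\perp$ associated with the quadric is the one defined by the polar form of the quadratic form; for a point $P$ of the quadric, $P^\perp$ is the tangent hyperplane at $P$. A generator of $\mathcal Q_{m,e}$ is a projective subspace of maximal dimension contained in it; generators are $\frac{m-e-1}{2}$-dimensional. A spread of $\mathcal Q_{m,e}$ is a set of $q^{\frac{m+e-1}{2}}+1$ pairwise disjoint generators. An $s$-space means an $s$-dimensional projective subspace. *)

theory Defs
  imports "HOL-Analysis.Analysis"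
begin

text \<open>Projective space PG(m,q) is modelled by the vector space 'a^'n over the
finite field 'a (q = CARD('a)), with CARD('n) = m+1. A projective s-space is a
linear subspace of vector dimension s+1; a point is a nonzero vector (up to scalars).\<close>

definition qform :: "'a::field^'n^'n \<Rightarrow> 'a^'n \<Rightarrow> 'a" where
  "qform c x = (\<Sum>i\<in>UNIV. \<Sum>j\<in>UNIV. c$i$j * x$i * x$j)"

definition polar :: "'a::field^'n^'n \<Rightarrow> 'a^'n \<Rightarrow> 'a^'n \<Rightarrow> 'a" where
  "polar c x y = qform c (x + y) - qform c x - qform c y"

definition nondegenerate :: "'a::field^'n^'n \<Rightarrow> bool" where
  "nondegenerate c \<longleftrightarrow>
     (\<forall>v. qform c v = 0 \<and> (\<forall>w. polar c v w = 0) \<longrightarrow> v = 0)"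

definition totally_singular :: "'a::field^'n^'n \<Rightarrow> ('a^'n) set \<Rightarrow> bool" where
  "totally_singular c W \<longleftrightarrow> vec.subspace W \<and> (\<forall>w\<in>W. qform c w = 0)"

definition generator :: "'a::field^'n^'n \<Rightarrow> ('a^'n) set \<Rightarrow> bool" where
  "generator c W \<longleftrightarrow> totally_singular c W \<and>
     (\<forall>U. totally_singular c U \<longrightarrow> vec.dim U \<le> vec.dim W)"

text \<open>The quadric Q(m,e) with CARD('n) = m+1: non-degenerate, generators of
projective dimension (m-e-1)/2, i.e. vector dimension (m+1-e)/2; e = 1 iff m even.\<close>
definition quadric_type :: "'a::field^'n^'n \<Rightarrow> nat \<Rightarrow> bool" where
  "quadric_type c e \<longleftrightarrow> nondegenerate c \<and> e \<in> {0,1,2} \<and>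
     (e = 1 \<longleftrightarrow> odd CARD('n)) \<and>
     (\<exists>W. generator c W \<and> 2 * vec.dim W = CARD('n) - e)"

definition spread :: "'a::field^'n^'n \<Rightarrow> nat \<Rightarrow> (nat \<Rightarrow> ('a^'n) set) \<Rightarrow> bool" where
  "spread c K S \<longleftrightarrow> (\<forall>i\<in>{1..K}. generator c (S i)) \<and>
     (\<forall>i\<in>{1..K}. \<forall>j\<in>{1..K}. i \<noteq> j \<longrightarrow> S i \<inter> S j = {0})"

end

theory Submission
  imports Defs
begin


lemma polar_formula: "polar c x y = (\<Sum>i\<in>UNIV. \<Sum>j\<in>UNIV. c$i$j * (x$i*y$j + y$i*x$j))"
  unfolding polar_def qform_def
  by (simp add: sum_subtractf[symmetric] algebra_simps)

lemma polar_sym: "polar c x y = polar c y x"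
  unfolding polar_def by (simp add: add.commute)

lemma qform_add: "qform c (x + y) = qform c x + qform c y + polar c x y"
  unfolding polar_def by simp

lemma polar_add2: "polar c x (y + z) = polar c x y + polar c x z"
  unfolding polar_formula by (simp add: algebra_simps sum.distrib)

lemma polar_scale2: "polar c x (a *s y) = a * polar c x y"
  unfolding polar_formula by (simp add: algebra_simps sum_distrib_left)

lemma polar_add1: "polar c (y + z) x = polar c y x + polar c z x"
  using polar_add2 polar_sym by metis

lemma polar_scale1: "polar c (a *s y) x = a * polar c y x"
  using polar_scale2 polar_sym by metis

lemma polar_diff2: "polar c x (y - z) = polar c x y - polar c x z"
  unfolding polar_formula by (simp add: algebra_simps sum_subtractf)

lemma polar_diff1: "polar c (y - z) x = polar c y x - polar c z x"
  using polar_diff2 polar_sym by metis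

lemma polar_zero2[simp]: "polar c x 0 = 0"
  unfolding polar_formula by simp
lemma polar_zero1[simp]: "polar c 0 x = 0"
  unfolding polar_formula by simp

lemma qform_scale: "qform c (a *s x) = a^2 * qform c x"
  unfolding qform_def by (simp add: algebra_simps sum_distrib_left power2_eq_square)

lemma polar_self: "polar c x x = 2 * qform c x"
  unfolding polar_formula qform_def by (simp add: algebra_simps sum_distrib_left sum.distrib)

lemma qform_zero[simp]: "qform c 0 = 0"
  unfolding qform_def by simp

lemma qform_diff: "qform c (x - y) = qform c x + qform c y - polar c x y"
proof -
  have "qform c (x + (-1) *s y) = qform c x + qform c y - polar c x y"
    by (simp only: qform_add qform_scale polar_scale2) simp
  moreover have "x + (-1) *s y = x - y" by (simp add: vec_eq_iff)
  ultimately show ?thesis by simp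
qed



lemma card_span_indep:
  fixes B :: "('a::{field,finite}^'n) set"
  assumes "vec.independent B"
  shows "card (vec.span B) = CARD('a) ^ card B"
proof -
  have "finite B" by simp
  then show ?thesis using assms
  proof (induction B rule: finite_induct)
    case empty then show ?case by simp
  next
    case (insert b S)
    have indS: "vec.independent S" using insert.prems insert.hyps vec.independent_insert by (metis (full_types))
    have nb: "b \<notin> vec.span S" using insert.prems insert.hyps vec.independent_insert by (metis (full_types))
    define f :: "'a \<times> ('a^'n) \<Rightarrow> 'a^'n" where "f = (\<lambda>(k,s). k *s b + s)"
    have eq: "vec.span (insert b S) = f ` (UNIV \<times> vec.span S)"
    proof
      show "vec.span (insert b S) \<subseteq> f ` (UNIV \<times> vec.span S)"
      proof
        fix x assume "x \<in> vec.span (insert b S)"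
        then obtain k where "x - k *s b \<in> vec.span S" using vec.span_insert by blast
        then show "x \<in> f ` (UNIV \<times> vec.span S)"
          unfolding f_def by (intro image_eqI[of _ _ "(k, x - k *s b)"]) auto
      qed
    next
      show "f ` (UNIV \<times> vec.span S) \<subseteq> vec.span (insert b S)"
      unfolding f_def proof clarsimp
        fix k s assume s: "s \<in> vec.span S"
        have "s \<in> vec.span (insert b S)" using s vec.span_mono[of S "insert b S"] by blast
        moreover have "k *s b \<in> vec.span (insert b S)" by (simp add: vec.span_base vec.span_scale)
        ultimately show "k *s b + s \<in> vec.span (insert b S)" using vec.span_add by blast
      qed
    qed
    have inj: "inj_on f (UNIV \<times> vec.span S)"
    unfolding f_def proof (rule inj_onI, clarsimp)
      fix k s k' s'
      assume s: "s \<in> vec.span S" "s' \<in> vec.span S" and e: "k *s b + s = k' *s b + s'"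
      have "(k - k') *s b = s' - s" using e by (simp add: algebra_simps vec_eq_iff)
      moreover have "s' - s \<in> vec.span S" using s vec.span_diff by blast
      ultimately have "k = k'"
      proof -
        assume h: "(k - k') *s b = s' - s" "s' - s \<in> vec.span S"
        show "k = k'"
        proof (rule ccontr)
        assume "k \<noteq> k'" then have h3: "k - k' \<noteq> 0" by simp
        have "inverse (k - k') *s ((k - k') *s b) = b" proof -
          have "inverse (k - k') * (k - k') = 1" using h3 by simp
          then show ?thesis by (simp only: vec.scale_scale vec.scale_one)
        qed
        then have "inverse (k - k') *s (s' - s) = b" unfolding h(1) .
        then have "b = inverse (k - k') *s (s' - s)" by (rule sym)
        then show False using nb vec.span_scale[OF h(2)] by metis
      qed
      qed
      then show "k = k' \<and> s = s'" using e by simp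
    qed
    have "card (vec.span (insert b S)) = card ((UNIV::'a set) \<times> vec.span S)"
      unfolding eq using inj by (rule card_image)
    also have "\<dots> = CARD('a) * card (vec.span S)" by (simp only: card_cartesian_product)
    also have "\<dots> = CARD('a) * CARD('a) ^ card S" using insert.IH indS by simp
    finally show ?case using insert.hyps by simp
  qed
qed

lemma card_subspace:
  fixes S :: "('a::{field,finite}^'n) set"
  assumes "vec.subspace S"
  shows "card S = CARD('a) ^ vec.dim S"
proof -
  obtain B where B: "B \<subseteq> S" "vec.independent B" "S \<subseteq> vec.span B" "card B = vec.dim S"
    using vec.basis_exists by blast
  have "vec.span B = S" using B assms vec.span_minimal by blast
  then show ?thesis using card_span_indep B by metis
qed



lemma card_prod_eq:
  fixes c :: "'a::{field,finite}"
  shows "card {(a,b). a*b = c} = (if c = 0 then 2*CARD('a) - 1 else CARD('a) - 1)"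
proof (cases "c = 0")
  case True
  define Z0 where "Z0 = ({0}::'a set) \<times> (UNIV::'a set)"
  define Z1 where "Z1 = (UNIV::'a set) \<times> ({0}::'a set)"
  have "{(a,b). a*b = c} = Z0 \<union> Z1" using True by (auto simp: Z0_def Z1_def)
  moreover have "card (Z0 \<union> Z1) = 2*CARD('a) - 1"
  proof -
    have "card Z0 + card Z1 = card (Z0 \<union> Z1) + card (Z0 \<inter> Z1)"
      by (rule card_Un_Int) (auto simp: Z0_def Z1_def)
    moreover have "Z0 \<inter> Z1 = {(0,0)}" by (auto simp: Z0_def Z1_def)
    moreover have "card Z0 = CARD('a)" "card Z1 = CARD('a)" by (simp_all add: Z0_def Z1_def card_cartesian_product)
    ultimately show ?thesis by simp
  qed
  ultimately show ?thesis using True by simp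
next
  case False
  have "{(a,b). a*b = c} = (\<lambda>a. (a, c / a)) ` (UNIV - {0})"
    using False by (auto simp: field_simps image_iff)
  moreover have "inj_on (\<lambda>a::'a. (a, c / a)) (UNIV - {0})" by (auto intro: inj_onI)
  ultimately have "card {(a,b). a*b = c} = card ((UNIV::'a set) - {0})"
    by (simp add: card_image)
  then show ?thesis using False by (simp add: card_Diff_singleton)
qed

definition sing :: "'a::field^'n^'n \<Rightarrow> ('a^'n) set \<Rightarrow> ('a^'n) set" where
  "sing c U = {v\<in>U. qform c v = 0}"

definition nondegU :: "'a::field^'n^'n \<Rightarrow> ('a^'n) set \<Rightarrow> bool" where
  "nondegU c U \<longleftrightarrow> (\<forall>v\<in>U. qform c v = 0 \<and> (\<forall>w\<in>U. polar c v w = 0) \<longrightarrow> v = 0)"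

definition tsU :: "'a::field^'n^'n \<Rightarrow> ('a^'n) set \<Rightarrow> ('a^'n) set \<Rightarrow> bool" where
  "tsU c U W \<longleftrightarrow> vec.subspace W \<and> W \<subseteq> U \<and> (\<forall>w\<in>W. qform c w = 0)"

lemma polar_ts:
  assumes "vec.subspace W" "\<forall>w\<in>W. qform c w = 0" "x \<in> W" "y \<in> W"
  shows "polar c x y = 0"
  using assms unfolding polar_def by (simp add: vec.subspace_add)

lemma span_single_ts:
  assumes "vec.subspace U" "v \<in> U" "qform c v = 0"
  shows "tsU c U (vec.span {v})"
  unfolding tsU_def
proof (intro conjI)
  show "vec.subspace (vec.span {v})" by (rule vec.subspace_span)
  show "vec.span {v} \<subseteq> U" using assms vec.span_minimal by blast
  show "\<forall>w\<in>vec.span {v}. qform c w = 0"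
    using assms(3) by (auto simp: vec.span_singleton qform_scale)
qed

lemma dim_single: "(v::'a::field^'n) \<noteq> 0 \<Longrightarrow> vec.dim {v} = 1"
  by (simp add: vec.dim_insert vec.span_empty)



lemma count_base:
  fixes c :: "'a::{field,finite}^'n^'n"
  assumes U: "vec.subspace U" and mx: "\<forall>W. tsU c U W \<longrightarrow> vec.dim W \<le> 0"
  shows "sing c U = {0}"
proof
  show "sing c U \<subseteq> {0}"
  proof
    fix v assume v: "v \<in> sing c U"
    show "v \<in> {0}"
    proof (rule ccontr)
      assume "v \<notin> {0}"
      then have "vec.dim (vec.span {v}) = 1" by (simp add: dim_single)
      moreover have "tsU c U (vec.span {v})" using v U span_single_ts by (auto simp: sing_def)
      ultimately show False using mx by fastforce
    qed
  qed
  show "{0} \<subseteq> sing c U" using U by (simp add: sing_def vec.subspace_0)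
qed

lemma decomp:
  fixes c :: "'a::{field,finite}^'n^'n"
  assumes U: "vec.subspace U" and pU: "p \<in> U" and uU: "u \<in> U"
    and Qp: "qform c p = 0" and Qu: "qform c u = 0" and pu: "polar c p u = 1"
  defines "U' \<equiv> {w\<in>U. polar c p w = 0 \<and> polar c u w = 0}"
  defines "\<psi> \<equiv> (\<lambda>(a,b,w). a *s p + b *s u + w)"
  shows "bij_betw \<psi> (UNIV \<times> UNIV \<times> U') U"
    and "\<And>a b w. w \<in> U' \<Longrightarrow> qform c (\<psi> (a,b,w)) = a * b + qform c w"
    and "vec.subspace U'"
proof -
  have up: "polar c u p = 1" using pu polar_sym by metis
  have pp: "polar c p p = 0" by (simp add: polar_self Qp)
  have uu: "polar c u u = 0" by (simp add: polar_self Qu)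
  show "vec.subspace U'"
    unfolding vec.subspace_def U'_def
    using U by (auto simp: vec.subspace_0 vec.subspace_add vec.subspace_scale polar_add2 polar_scale2)
  show "bij_betw \<psi> (UNIV \<times> UNIV \<times> U') U"
  proof (rule bij_betwI[where g="\<lambda>v. (polar c u v, polar c p v, v - polar c u v *s p - polar c p v *s u)"])
    show "\<psi> \<in> UNIV \<times> UNIV \<times> U' \<rightarrow> U"
      using U pU uU by (auto simp: \<psi>_def U'_def vec.subspace_add vec.subspace_scale)
    show "(\<lambda>v. (polar c u v, polar c p v, v - polar c u v *s p - polar c p v *s u)) \<in> U \<rightarrow> UNIV \<times> UNIV \<times> U'"
      using U pU uU by (auto simp: U'_def vec.subspace_diff vec.subspace_scale polar_diff2 polar_scale2 pp uu up pu)
    show "(\<lambda>v. (polar c u v, polar c p v, v - polar c u v *s p - polar c p v *s u)) (\<psi> x) = x"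
      if "x \<in> UNIV \<times> UNIV \<times> U'" for x
      using that by (auto simp: \<psi>_def U'_def polar_add2 polar_scale2 pp uu up pu)
    show "\<psi> ((\<lambda>v. (polar c u v, polar c p v, v - polar c u v *s p - polar c p v *s u)) y) = y"
      if "y \<in> U" for y
      by (simp add: \<psi>_def)
  qed
  show "qform c (\<psi> (a,b,w)) = a * b + qform c w" if "w \<in> U'" for a b w
  proof -
    have w: "polar c p w = 0" "polar c u w = 0" using that by (auto simp: U'_def)
    have "qform c (\<psi> (a,b,w)) = qform c (a *s p) + qform c (b *s u) + polar c (a *s p) (b *s u)
       + qform c w + polar c (a *s p + b *s u) w"
      by (simp add: \<psi>_def qform_add)
    also have "\<dots> = a * b + qform c w"
      by (simp add: qform_scale Qp Qu polar_scale1 polar_scale2 polar_add1 pu w)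
    finally show ?thesis .
  qed
qed



lemma hyp_partner:
  fixes c :: "'a::{field,finite}^'n^'n"
  assumes U: "vec.subspace U" and nd: "nondegU c U" and pU: "p \<in> U" and p0: "p \<noteq> 0"
    and Qp: "qform c p = 0"
  obtains u where "u \<in> U" "qform c u = 0" "polar c p u = 1"
proof -
  obtain w where w: "w \<in> U" "polar c p w \<noteq> 0" using nd pU p0 Qp unfolding nondegU_def by blast
  define u0 where "u0 = inverse (polar c p w) *s w"
  have u0: "u0 \<in> U" "polar c p u0 = 1" using w U by (auto simp: u0_def vec.subspace_scale polar_scale2)
  define u where "u = u0 - qform c u0 *s p"
  have pp: "polar c p p = 0" by (simp add: polar_self Qp)
  have "u \<in> U" using u0 pU U by (simp add: u_def vec.subspace_diff vec.subspace_scale)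
  moreover have "polar c p u = 1" using u0 by (simp add: u_def polar_diff2 polar_scale2 pp)
  moreover have "qform c u = 0"
  proof -
    have "polar c u0 p = 1" using u0 polar_sym by metis
    then show ?thesis by (simp add: u_def qform_diff qform_scale Qp polar_scale2)
  qed
  ultimately show ?thesis using that by blast
qed

lemma count:
  fixes c :: "'a::{field,finite}^'n^'n"
  shows "vec.subspace U \<Longrightarrow> nondegU c U \<Longrightarrow> card U = CARD('a)^(2*g+e)
    \<Longrightarrow> (\<exists>W. tsU c U W \<and> g \<le> vec.dim W) \<Longrightarrow> (\<forall>W. tsU c U W \<longrightarrow> vec.dim W \<le> g)
    \<Longrightarrow> int CARD('a) * int (card (sing c U)) + int CARD('a)^(g+e) = int CARD('a)^(2*g+e) + int CARD('a)^(g+1)"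
proof (induction g arbitrary: U)
  case 0
  then have "sing c U = {0}" using count_base by simp
  then show ?case by simp
next
  case (Suc g)
  note U = Suc.prems(1) and nd = Suc.prems(2) and cU = Suc.prems(3)
  obtain W where W: "tsU c U W" "Suc g \<le> vec.dim W" using Suc.prems(4) by blast
  have Wsub: "vec.subspace W" and WU: "W \<subseteq> U" and WQ: "\<forall>w\<in>W. qform c w = 0"
    using W(1) by (auto simp: tsU_def)
  obtain p where p: "p \<in> W" "p \<noteq> 0"
  proof -
    have "W \<noteq> {0}" using W(2) by auto
    moreover have "0 \<in> W" using Wsub vec.subspace_0 by blast
    ultimately show ?thesis using that by blast
  qed
  have pU: "p \<in> U" and Qp: "qform c p = 0" using p WU WQ by auto
  obtain u where u: "u \<in> U" "qform c u = 0" "polar c p u = 1"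
    using hyp_partner[OF U nd pU p(2) Qp] by blast
  define U' where "U' = {w\<in>U. polar c p w = 0 \<and> polar c u w = 0}"
  define \<psi> where "\<psi> = (\<lambda>(a,b,w). a *s p + b *s u + w)"
  have bij: "bij_betw \<psi> (UNIV \<times> UNIV \<times> U') U"
    and Qpsi: "\<And>a b w. w \<in> U' \<Longrightarrow> qform c (\<psi> (a,b,w)) = a * b + qform c w"
    and U'sub: "vec.subspace U'"
    using decomp[OF U pU u(1) Qp u(2) u(3)] unfolding U'_def \<psi>_def by auto
  let ?q = "CARD('a)"
  have qpos: "?q > 0" by simp
  have "card U = card ((UNIV::'a set) \<times> (UNIV::'a set) \<times> U')"
    using bij bij_betw_same_card by metis
  then have "card U = ?q * ?q * card U'" by (simp add: card_cartesian_product)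
  then have cU': "card U' = ?q^(2*g+e)" using cU qpos by (simp add: power_add power2_eq_square)
  have nd': "nondegU c U'"
    unfolding nondegU_def
  proof (intro ballI impI)
    fix v assume v: "v \<in> U'" and h: "qform c v = 0 \<and> (\<forall>w\<in>U'. polar c v w = 0)"
    have "\<forall>x\<in>U. polar c v x = 0"
    proof
      fix x assume "x \<in> U"
      then obtain a b w where x: "x = \<psi> (a,b,w)" "w \<in> U'"
        using bij unfolding bij_betw_def by auto
      have "polar c v p = 0" "polar c v u = 0" using v polar_sym[of c v] unfolding U'_def by auto
      then show "polar c v x = 0"
        using h x by (simp add: \<psi>_def polar_add2 polar_scale2)
    qed
    then show "v = 0" using nd h v unfolding nondegU_def U'_def by blast
  qed
  have ex': "\<exists>W. tsU c U' W \<and> g \<le> vec.dim W"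
  proof -
    define W0 where "W0 = {w\<in>W. polar c u w = 0}"
    have W0sub: "vec.subspace W0"
      using Wsub unfolding W0_def vec.subspace_def by (auto simp: polar_add2 polar_scale2)
    have Wperp: "\<forall>w\<in>W. polar c p w = 0" using polar_ts[OF Wsub WQ] p(1) by blast
    have "tsU c U' W0" using W0sub WU WQ Wperp unfolding tsU_def W0_def U'_def by auto
    moreover have "vec.dim W \<le> vec.dim W0 + 1"
    proof (cases "\<exists>w1\<in>W. polar c u w1 \<noteq> 0")
      case False then have "W0 = W" unfolding W0_def by auto
      then show ?thesis by simp
    next
      case True
      then obtain w1 where w1: "w1 \<in> W" "polar c u w1 \<noteq> 0" by blast
      have "W \<subseteq> vec.span (insert w1 W0)"
      proof
        fix w assume w: "w \<in> W"
        let ?k = "polar c u w / polar c u w1"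
        have "w - ?k *s w1 \<in> W0"
          using w w1 Wsub unfolding W0_def
          by (auto simp: vec.subspace_diff vec.subspace_scale polar_diff2 polar_scale2)
        then have "w - ?k *s w1 \<in> vec.span W0" using vec.span_base by blast
        then show "w \<in> vec.span (insert w1 W0)" using vec.span_insert by blast
      qed
      then have "vec.dim W \<le> vec.dim (insert w1 W0)"
        by (metis vec.dim_span vec.dim_subset)
      also have "\<dots> \<le> vec.dim W0 + 1" by (simp add: vec.dim_insert)
      finally show ?thesis .
    qed
    ultimately show ?thesis using W(2) by (intro exI[of _ W0]) auto
  qed
  have mx': "\<forall>W'. tsU c U' W' \<longrightarrow> vec.dim W' \<le> g"
  proof (intro allI impI)
    fix W' assume W': "tsU c U' W'"
    have W'sub: "vec.subspace W'" and W'U: "W' \<subseteq> U'" and W'Q: "\<forall>w\<in>W'. qform c w = 0"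
      using W' by (auto simp: tsU_def)
    have up: "polar c u p = 1" using u(3) polar_sym by metis
    have pn: "p \<notin> W'" using W'U up unfolding U'_def by auto
    have "tsU c U (vec.span (insert p W'))"
      unfolding tsU_def
    proof (intro conjI)
      show "vec.subspace (vec.span (insert p W'))" by (rule vec.subspace_span)
      show "vec.span (insert p W') \<subseteq> U"
        using pU W'U U unfolding U'_def by (intro vec.span_minimal) auto
      show "\<forall>w\<in>vec.span (insert p W'). qform c w = 0"
      proof
        fix x assume "x \<in> vec.span (insert p W')"
        then obtain k where k: "x - k *s p \<in> W'"
          using vec.span_insert vec.span_eq_iff W'sub by blast
        have "polar c p (x - k *s p) = 0" using k W'U unfolding U'_def by auto
        moreover have "x = k *s p + (x - k *s p)" by simp
        ultimately have "qform c x = qform c (k *s p) + qform c (x - k *s p) + k * 0"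
          using qform_add polar_scale1 by metis
        then show "qform c x = 0" using k W'Q Qp by (simp add: qform_scale)
      qed
    qed
    then have "vec.dim (vec.span (insert p W')) \<le> Suc g" using Suc.prems(5) by blast
    moreover have "vec.dim (vec.span (insert p W')) = vec.dim W' + 1"
    proof -
      have sp: "vec.span W' = W'" using W'sub vec.span_eq_iff by blast
      have "p \<notin> vec.span W'" using pn sp by metis
      then show ?thesis by (simp add: vec.dim_insert)
    qed
    ultimately show "vec.dim W' \<le> g" by simp
  qed
  have IH: "int ?q * int (card (sing c U')) + int ?q^(g+e) = int ?q^(2*g+e) + int ?q^(g+1)"
    using Suc.IH[OF U'sub nd' cU' ex' mx'] .
  define T where "T = {(a,b,w). w \<in> U' \<and> a * b + qform c w = 0}"
  have img: "\<psi> ` (UNIV \<times> UNIV \<times> U') = U" and inj: "inj_on \<psi> (UNIV \<times> UNIV \<times> U')"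
    using bij unfolding bij_betw_def by auto
  have T1: "T = {t \<in> UNIV \<times> UNIV \<times> U'. qform c (\<psi> t) = 0}"
    unfolding T_def using Qpsi by auto
  have T2: "\<psi> ` {t \<in> UNIV \<times> UNIV \<times> U'. qform c (\<psi> t) = 0} = {x \<in> \<psi> ` (UNIV \<times> UNIV \<times> U'). qform c x = 0}"
    by blast
  have "sing c U = \<psi> ` T" unfolding T1 T2 img sing_def ..
  moreover have "inj_on \<psi> T" using inj unfolding T1 by (rule inj_on_subset) blast
  ultimately have "card (sing c U) = card T" by (simp add: card_image)
  also have "\<dots> = card (SIGMA w:U'. {(a,b). a * b = - qform c w})"
  proof (rule bij_betw_same_card)
    show "bij_betw (\<lambda>(a,b,w). (w,(a,b))) T
            (SIGMA w:U'. {(a,b). a * b = - qform c w})"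
      by (rule bij_betwI[where g="\<lambda>(w,(a,b)). (a,b,w)"]) (auto simp: T_def eq_neg_iff_add_eq_0)
  qed
  also have "\<dots> = (\<Sum>w\<in>U'. card {(a,b). a * b = - qform c w})"
    by (rule card_SigmaI) auto
  finally have cs: "card (sing c U) = (\<Sum>w\<in>U'. card {(a,b). a * b = - qform c w})" .
  have q1: "?q \<ge> 1" using qpos by linarith
  have "int (card (sing c U)) = (\<Sum>w\<in>U'. if qform c w = 0 then 2 * int ?q - 1 else int ?q - 1)"
    unfolding cs of_nat_sum
    by (rule sum.cong) (use q1 in \<open>auto simp: card_prod_eq of_nat_diff\<close>)
  also have "\<dots> = (\<Sum>w\<in>U' \<inter> {w. qform c w = 0}. 2 * int ?q - 1) + (\<Sum>w\<in>U' \<inter> - {w. qform c w = 0}. int ?q - 1)"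
    by (rule sum.If_cases) simp
  also have "\<dots> = (2 * int ?q - 1) * int (card (sing c U')) + (int ?q - 1) * (int (card U') - int (card (sing c U')))"
  proof -
    have e1: "U' \<inter> {w. qform c w = 0} = sing c U'" by (auto simp: sing_def)
    have e2: "U' \<inter> - {w. qform c w = 0} = U' - sing c U'" by (auto simp: sing_def)
    have "card (U' - sing c U') = card U' - card (sing c U')"
      by (rule card_Diff_subset) (auto simp: sing_def)
    moreover have "card (sing c U') \<le> card U'" by (rule card_mono) (auto simp: sing_def)
    ultimately show ?thesis unfolding e1 e2 by (simp add: of_nat_diff)
  qed
  finally have sU: "int (card (sing c U)) = int ?q * int (card (sing c U')) + (int ?q - 1) * int ?q ^ (2*g+e)"
    using cU' by (simp add: algebra_simps)
  define Q where "Q = int ?q"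
  define A where "A = Q^(2*g+e)"
  define B where "B = Q^(g+e)"
  define C where "C = Q^(g+1)"
  have IH': "Q * int (card (sing c U')) = A + C - B" using IH unfolding Q_def A_def B_def C_def by simp
  have sU': "int (card (sing c U)) = Q * int (card (sing c U')) + (Q - 1) * A"
    using sU unfolding Q_def A_def by simp
  have "Q * int (card (sing c U)) + Q * B = Q * Q * A + Q * C"
  proof -
    have h: "Q * (Q * int (card (sing c U'))) = Q * A + Q * C - Q * B"
      using IH' by (simp add: right_diff_distrib distrib_left)
    show ?thesis unfolding sU' using h by (simp add: algebra_simps)
  qed
  moreover have "Q^(Suc g + e) = Q * B" "Q^(2 * Suc g + e) = Q * Q * A" "Q^(Suc g + 1) = Q * C"
    unfolding A_def B_def C_def by (simp_all add: power_add)
  ultimately show ?case unfolding Q_def by simp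
qed



lemma span_insert_sub:
  assumes "vec.subspace S"
  shows "x \<in> vec.span (insert p S) \<longleftrightarrow> (\<exists>k. x - k *s p \<in> S)"
proof -
  have sp: "vec.span S = S" using assms vec.span_eq_iff by blast
  show ?thesis using vec.span_insert[of p S] sp by auto
qed

lemma LA1:
  fixes x y p :: "'a::field^'n"
  assumes Si: "vec.subspace Si" and Sj: "vec.subspace Sj" and dis: "Si \<inter> Sj = {0}"
    and Hs: "vec.subspace H" and pH: "p \<notin> H"
    and x: "x \<in> H" "x - a *s p \<in> Si" "x - b *s p \<in> Sj" "x \<noteq> 0"
    and y: "y \<in> H" "y - a' *s p \<in> Si" "y - b' *s p \<in> Sj"
  shows "y \<in> vec.span {x}"
proof -
  have scal0: "k = 0" if "k *s p \<in> H" for k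
  proof (rule ccontr)
    assume "k \<noteq> 0"
    then have "inverse k *s (k *s p) = p" by (simp add: vec.scale_scale)
    then show False using that pH vec.subspace_scale[OF Hs] by metis
  qed
  define g0 where "g0 = b - a"
  define g where "g = b' - a'"
  have g0: "g0 \<noteq> 0"
  proof
    assume "g0 = 0"
    then have "a = b" by (simp add: g0_def)
    then have "x - a *s p \<in> Si \<inter> Sj" using x by simp
    then have "x = a *s p" using dis by auto
    then have "a = 0" using scal0 x(1) by metis
    then show False using \<open>x = a *s p\<close> x(4) by simp
  qed
  define u where "u = g0 *s (y - a' *s p) - g *s (x - a *s p)"
  have uSi: "u \<in> Si" unfolding u_def by (intro vec.subspace_diff[OF Si] vec.subspace_scale[OF Si] y(2) x(2))
  have "u = g0 *s (y - b' *s p) - g *s (x - b *s p)"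
    unfolding u_def g0_def g_def by (simp add: vec_eq_iff algebra_simps)
  moreover have "g0 *s (y - b' *s p) - g *s (x - b *s p) \<in> Sj" by (intro vec.subspace_diff[OF Sj] vec.subspace_scale[OF Sj] y(3) x(3))
  ultimately have uSj: "u \<in> Sj" by simp
  have u0: "u = 0" using uSi uSj dis by auto
  define v where "v = g0 *s y - g *s x"
  have "v = (g0 * a' - g * a) *s p" using u0 unfolding u_def v_def by (simp add: vec_eq_iff algebra_simps)
  moreover have "v \<in> H" unfolding v_def by (intro vec.subspace_diff[OF Hs] vec.subspace_scale[OF Hs] y(1) x(1))
  ultimately have "v = 0" using scal0 by (metis vec.scale_zero_left)
  then have "y = (g / g0) *s x" using g0 unfolding v_def by (simp add: vec_eq_iff field_simps)
  then show ?thesis by (simp add: vec.span_singleton image_iff)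
qed

theorem mainTheorem3:
  fixes c :: "'a::{field,finite}^'n^'n"
    and r e N :: nat
    and Sg :: "nat \<Rightarrow> ('a^'n) set"
    and p :: "'a^'n"
    and H :: "('a^'n) set"
    and Pis :: "nat \<Rightarrow> ('a^'n) set"
  assumes dimn: "CARD('n) = r + 3"
    and e: "e \<in> {0,1,2}"
    and par: "(e \<in> {0,2} \<longrightarrow> odd r) \<and> (e = 1 \<longrightarrow> even r)"
    and quad: "quadric_type c e"
    and N_def: "N = CARD('a) ^ ((r + e + 1) div 2)"
    and spr: "spread c (N + 1) Sg"
    and P: "p \<noteq> 0" "p \<in> Sg (N + 1)"
    and H: "vec.subspace H" "vec.dim H = r + 1"
           "H \<subseteq> {x. polar c p x = 0}" "p \<notin> H"
    and Pi_def: "\<And>i. Pis i = vec.span (insert p (Sg i)) \<inter> H"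
  shows "(e \<in> {1,2} \<longrightarrow>
            (\<forall>i\<in>{1..N}. \<forall>j\<in>{1..N}. i \<noteq> j \<longrightarrow> vec.dim (Pis i \<inter> Pis j) \<le> 1))
       \<and> (e = 0 \<and> r mod 4 = 1 \<longrightarrow>
            (\<forall>i\<in>{1..N}. \<forall>j\<in>{1..N}. i \<noteq> j \<longrightarrow> vec.dim (Pis i \<inter> Pis j) = 1))
       \<and> (\<forall>x. x \<noteq> 0 \<and> x \<in> H \<and> qform c x = 0 \<and> x \<notin> Sg (N + 1) \<longrightarrow>
            card {i\<in>{1..N}. x \<in> Pis i} = CARD('a))"
proof -
  let ?q = "CARD('a)"
  have qpos: "?q > 0" by simp
  have nd: "nondegU c UNIV" using quad unfolding quadric_type_def nondegenerate_def nondegU_def by blast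
  obtain W0 where W0: "generator c W0" "2 * vec.dim W0 = CARD('n) - e"
    using quad unfolding quadric_type_def by blast
  define g where "g = vec.dim W0"
  have e2: "e \<le> 2" using e by auto
  have n_eq: "CARD('n) = 2*g + e" using W0(2) dimn e2 unfolding g_def by linarith
  have g1: "g \<ge> 1" using n_eq dimn e2 by linarith
  have gen_dim: "vec.dim W = g" if "generator c W" for W
    using W0(1) that unfolding generator_def g_def by (meson le_antisym)
  have gen_sub: "vec.subspace W" if "generator c W" for W
    using that unfolding generator_def totally_singular_def by auto
  have gen_Q: "qform c w = 0" if "generator c W" "w \<in> W" for W w
    using that unfolding generator_def totally_singular_def by auto
  have tsU_iff: "tsU c UNIV W \<longleftrightarrow> totally_singular c W" for W
    unfolding tsU_def totally_singular_def by auto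
  have cardUNIV: "card (UNIV::('a^'n) set) = ?q^(2*g+e)"
    using card_subspace[OF vec.subspace_UNIV, where 'a='a and 'n='n] n_eq by (simp add: card_cart_basis)
  have cnt: "int ?q * int (card (sing c UNIV)) + int ?q^(g+e) = int ?q^(2*g+e) + int ?q^(g+1)"
  proof (rule count[OF vec.subspace_UNIV nd cardUNIV])
    show "\<exists>W. tsU c UNIV W \<and> g \<le> vec.dim W" using W0(1) tsU_iff unfolding generator_def g_def by blast
    show "\<forall>W. tsU c UNIV W \<longrightarrow> vec.dim W \<le> g" using W0(1) tsU_iff unfolding generator_def g_def by blast
  qed
  have Ndiv: "(r + e + 1) div 2 = g + e - 1" using n_eq dimn g1 by linarith
  have qN: "?q * N = ?q^(g+e)" using N_def Ndiv g1 by (simp add: power_Suc[symmetric])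
  have gen: "generator c (Sg i)" if "i \<in> {1..N+1}" for i using spr that unfolding spread_def by blast
  have dis: "Sg i \<inter> Sg j = {0}" if "i \<in> {1..N+1}" "j \<in> {1..N+1}" "i \<noteq> j" for i j
    using spr that unfolding spread_def by blast
  have Ssub: "vec.subspace (Sg i)" if "i \<in> {1..N+1}" for i using gen_sub gen that by blast
  have cover: "\<exists>i\<in>{1..N+1}. v \<in> Sg i" if "v \<noteq> 0" "qform c v = 0" for v
  proof -
    define UU where "UU = (\<Union>i\<in>{1..N+1}. Sg i - {0})"
    have cSi: "card (Sg i - {0}) = ?q^g - 1" if "i \<in> {1..N+1}" for i
    proof -
      have "card (Sg i) = ?q^g" using card_subspace[OF Ssub[OF that]] gen_dim[OF gen[OF that]] by simp
      moreover have "0 \<in> Sg i" using Ssub[OF that] vec.subspace_0 by blast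
      ultimately show ?thesis by (simp add: card_Diff_singleton)
    qed
    have "card UU = (\<Sum>i\<in>{1..N+1}. card (Sg i - {0}))"
      unfolding UU_def
    proof (rule card_UN_disjoint)
      show "finite {1..N+1}" by simp
      show "\<forall>i\<in>{1..N + 1}. finite (Sg i - {0})" by simp
      show "\<forall>i\<in>{1..N + 1}. \<forall>j\<in>{1..N + 1}. i \<noteq> j \<longrightarrow> (Sg i - {0}) \<inter> (Sg j - {0}) = {}"
      proof (intro ballI impI)
        fix i j assume "i \<in> {1..N+1}" "j \<in> {1..N+1}" "i \<noteq> j"
        then have "Sg i \<inter> Sg j = {0}" by (rule dis)
        then show "(Sg i - {0}) \<inter> (Sg j - {0}) = {}" by blast
      qed
    qed
    also have "\<dots> = (N+1) * (?q^g - 1)" using cSi by simp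
    finally have cUn: "card UU = (N+1) * (?q^g - 1)" .
    have s0: "0 \<in> sing c UNIV" by (simp add: sing_def)
    have cS: "card (sing c UNIV - {0}) = card (sing c UNIV) - 1" using s0 by (simp add: card_Diff_singleton)
    have "int ?q * int (card (sing c UNIV)) = int ?q * (int (N+1) * (int ?q^g - 1) + 1)"
    proof -
      have "int ?q * int N = int ?q^(g+e)" using qN by (metis of_nat_mult of_nat_power)
      moreover have "int ?q ^(2*g+e) = int ?q^(g+e) * int ?q^g"
      proof -
        have "2*g+e = (g+e) + g" by simp
        then show ?thesis by (metis power_add)
      qed
      moreover have "int ?q^(g+1) = int ?q * int ?q^g" by simp
      ultimately show ?thesis using cnt by (simp add: algebra_simps)
    qed
    then have "int (card (sing c UNIV)) = int (N+1) * (int ?q^g - 1) + 1" using qpos by simp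
    moreover have "?q^g \<ge> 1" using qpos by simp
    ultimately have "card (sing c UNIV) = (N+1) * (?q^g - 1) + 1"
    proof -
      assume a1: "int (card (sing c UNIV)) = int (N+1) * (int ?q^g - 1) + 1" and a2: "?q^g \<ge> 1"
      obtain Z where Z: "?q^g = Z + 1" using a2 by (metis le_add_diff_inverse2)
      have "int ((N+1) * (?q^g - 1) + 1) = int (N+1) * (int ?q^g - 1) + 1"
        unfolding of_nat_power[symmetric] Z by (simp add: algebra_simps)
      then show ?thesis using a1 by linarith
    qed
    then have eqc: "card UU = card (sing c UNIV - {0})" using cUn cS by simp
    have sub: "UU \<subseteq> sing c UNIV - {0}" unfolding UU_def sing_def using gen gen_Q by blast
    have "UU = sing c UNIV - {0}" by (rule card_subset_eq) (use sub eqc in auto)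
    moreover have "v \<in> sing c UNIV - {0}" using that by (simp add: sing_def)
    ultimately show ?thesis unfolding UU_def by blast
  qed
  have HS: "vec.subspace H" "p \<notin> H" using H by auto
  have Hperp: "polar c p x = 0" if "x \<in> H" for x using H(3) that by auto
  have iN: "i \<in> {1..N+1}" if "i \<in> {1..N}" for i using that by auto
  have NN: "N+1 \<in> {1..N+1}" by simp
  have pnot: "p \<notin> Sg i" if "i \<in> {1..N}" for i
  proof
    assume "p \<in> Sg i"
    then have "p \<in> Sg i \<inter> Sg (N+1)" using P by simp
    moreover have "i \<noteq> N+1" using that by simp
    ultimately show False using dis[OF iN[OF that] NN] P(1) by blast
  qed
  have memPis: "x \<in> Pis i \<longleftrightarrow> x \<in> H \<and> (\<exists>k. x - k *s p \<in> Sg i)" if "i \<in> {1..N+1}" for i x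
    unfolding Pi_def using span_insert_sub[OF Ssub[OF that]] by blast
  have dim0: "vec.dim {0::'a^'n} = 0" by (simp add: vec.dim_insert vec.span_empty)
  have partI: "vec.dim (Pis i \<inter> Pis j) \<le> 1" if ij: "i \<in> {1..N}" "j \<in> {1..N}" "i \<noteq> j" for i j
  proof (cases "Pis i \<inter> Pis j \<subseteq> {0}")
    case True
    then have "vec.dim (Pis i \<inter> Pis j) \<le> vec.dim {0::'a^'n}" by (rule vec.dim_subset)
    then show ?thesis using dim0 by linarith
  next
    case False
    then obtain x where x: "x \<in> Pis i" "x \<in> Pis j" "x \<noteq> 0" by blast
    obtain a b where ab: "x \<in> H" "x - a *s p \<in> Sg i" "x - b *s p \<in> Sg j"
      using x memPis iN ij by blast
    have dij: "Sg i \<inter> Sg j = {0}" using dis iN ij by blast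
    have "Pis i \<inter> Pis j \<subseteq> vec.span {x}"
    proof
      fix y assume y: "y \<in> Pis i \<inter> Pis j"
      obtain a' b' where ab': "y \<in> H" "y - a' *s p \<in> Sg i" "y - b' *s p \<in> Sg j"
        using y memPis iN ij by blast
      show "y \<in> vec.span {x}"
        by (rule LA1[OF Ssub[OF iN[OF ij(1)]] Ssub[OF iN[OF ij(2)]] dij HS ab x(3) ab'])
    qed
    then have "vec.dim (Pis i \<inter> Pis j) \<le> vec.dim (vec.span {x})" by (rule vec.dim_subset)
    also have "\<dots> \<le> 1" using x(3) by (simp add: dim_single)
    finally show ?thesis .
  qed
  have partII: "vec.dim (Pis i \<inter> Pis j) = 1" if e0: "e = 0" and ij: "i \<in> {1..N}" "j \<in> {1..N}" "i \<noteq> j" for i j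
  proof -
    have Si: "vec.subspace (Sg i)" "vec.subspace (Sg j)" using Ssub iN ij by blast+
    have dij: "Sg i \<inter> Sg j = {0}" using dis iN ij by blast
    have di: "vec.dim (Sg i) = g" "vec.dim (Sg j) = g" using gen_dim gen iN ij by blast+
    let ?S = "{x + y |x y. x \<in> Sg i \<and> y \<in> Sg j}"
    have "vec.dim ?S + vec.dim (Sg i \<inter> Sg j) = vec.dim (Sg i) + vec.dim (Sg j)"
      by (rule vec.dim_sums_Int[OF Si])
    then have "vec.dim ?S = CARD('n)" using dij dim0 di n_eq e0 by simp
    then have "vec.span ?S = UNIV" using vec.dim_eq_full[of ?S] by (simp add: card_cart_basis vec.dimension_def)
    moreover have "vec.span ?S = ?S" using vec.subspace_sums[OF Si] by (simp only: vec.span_eq_iff)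
    ultimately have "p \<in> ?S" by simp
    then obtain s t where st: "p = s + t" "s \<in> Sg i" "t \<in> Sg j" by blast
    have Qs: "qform c s = 0" and Qt: "qform c t = 0" using st gen_Q gen iN ij by blast+
    have Qp: "qform c p = 0" using P gen_Q gen NN by blast
    have pst: "polar c s t = 0" using Qp Qs Qt st(1) by (simp add: qform_add)
    have ps: "polar c p s = 0"
      using st(1) pst by (simp add: polar_add1 polar_self Qs polar_sym[of c t s])
    define PP where "PP = {x. polar c p x = 0}"
    have PPsub: "vec.subspace PP" unfolding PP_def vec.subspace_def by (simp add: polar_add2 polar_scale2)
    have pPP: "p \<in> PP" unfolding PP_def using Qp by (simp add: polar_self)
    have sPH: "vec.span (insert p H) \<subseteq> PP" using pPP H(3) PPsub unfolding PP_def
      by (intro vec.span_minimal) auto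
    have dPH: "vec.dim (vec.span (insert p H)) = r + 2"
    proof -
      have sH: "vec.span H = H" using HS(1) by (simp only: vec.span_eq_iff)
      have "p \<notin> vec.span H" using HS(2) sH by metis
      then show ?thesis using H(2) by (simp add: vec.dim_insert)
    qed
    have "PP \<noteq> UNIV"
    proof
      assume "PP = UNIV"
      then have "\<forall>w. polar c p w = 0" unfolding PP_def by auto
      then show False using quad Qp P(1) unfolding quadric_type_def nondegenerate_def by blast
    qed
    then have "vec.dim PP < CARD('n)"
      using vec.subspace_dim_equal[OF PPsub vec.subspace_UNIV] vec.dim_subset_UNIV[of PP]
      by (fastforce simp: card_cart_basis vec.dimension_def)
    then have "vec.dim PP \<le> vec.dim (vec.span (insert p H))" using dPH dimn by simp
    then have PPeq: "vec.span (insert p H) = PP"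
      using vec.subspace_dim_equal[OF vec.subspace_span PPsub sPH] by blast
    have "s \<in> PP" unfolding PP_def using ps by simp
    then obtain k where k: "s - k *s p \<in> H" using PPeq span_insert_sub[OF HS(1)] by blast
    define h where "h = s - k *s p"
    have h0: "h \<noteq> 0"
    proof
      assume "h = 0"
      then have s_eq: "s = k *s p" unfolding h_def by simp
      have "t = (1 - k) *s p" using st(1) s_eq by (simp add: vec_eq_iff algebra_simps)
      show False
      proof (cases "k = 0")
        case True
        then have "p = t" using st(1) s_eq by simp
        then show False using pnot ij st by blast
      next
        case False
        then have "inverse k *s s = p" using s_eq by (simp add: vec.scale_scale)
        then have "p \<in> Sg i" using vec.subspace_scale[OF Si(1) st(2)] by metis
        then show False using pnot ij by blast
      qed
    qed
    have hi: "h \<in> Pis i" using memPis[OF iN[OF ij(1)]] k st unfolding h_def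
      by (metis (no_types, lifting) add_diff_cancel_left' diff_minus_eq_add vec.scale_minus_left diff_add_cancel)
    have "h - (1 - k) *s p = - t" unfolding h_def using st(1) by (simp add: vec_eq_iff algebra_simps)
    moreover have "- t \<in> Sg j" using vec.subspace_neg[OF Si(2) st(3)] .
    ultimately have hj: "h \<in> Pis j" using memPis[OF iN[OF ij(2)]] k unfolding h_def by metis
    have "vec.dim {h} \<le> vec.dim (Pis i \<inter> Pis j)" using hi hj by (intro vec.dim_subset) auto
    then have "1 \<le> vec.dim (Pis i \<inter> Pis j)" using h0 dim_single by metis
    then show ?thesis using partI[OF ij] by simp
  qed
  have Qp: "qform c p = 0" using P gen_Q gen NN by blast
  have partIII: "card {i\<in>{1..N}. x \<in> Pis i} = CARD('a)"
    if x: "x \<noteq> 0" "x \<in> H" "qform c x = 0" "x \<notin> Sg (N + 1)" for x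
  proof -
    have xp: "polar c x p = 0" using Hperp[OF x(2)] polar_sym by metis
    have nz: "x - a *s p \<noteq> 0" for a
    proof
      assume "x - a *s p = 0"
      then have xa: "x = a *s p" by simp
      show False
      proof (cases "a = 0")
        case True then show False using xa x(1) by simp
      next
        case False
        then have "inverse a *s x = p" using xa by (simp add: vec.scale_scale)
        then show False using vec.subspace_scale[OF HS(1) x(2)] HS(2) by metis
      qed
    qed
    have Qa: "qform c (x - a *s p) = 0" for a
      by (simp add: qform_diff qform_scale Qp x(3) polar_scale2 xp)
    have ex: "\<exists>i. i \<in> {1..N} \<and> x - a *s p \<in> Sg i" for a
    proof -
      obtain i where i: "i \<in> {1..N+1}" "x - a *s p \<in> Sg i" using cover[OF nz Qa] by blast
      have "i \<noteq> N+1"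
      proof
        assume "i = N+1"
        then have "(x - a *s p) + a *s p \<in> Sg (N+1)"
          using i(2) vec.subspace_add[OF Ssub[OF NN]] vec.subspace_scale[OF Ssub[OF NN] P(2)] by blast
        then show False using x(4) by simp
      qed
      then show ?thesis using i by auto
    qed
    define f where "f a = (SOME i. i \<in> {1..N} \<and> x - a *s p \<in> Sg i)" for a
    have f: "f a \<in> {1..N}" "x - a *s p \<in> Sg (f a)" for a
      using someI_ex[OF ex[of a]] unfolding f_def by blast+
    have uniq: "i = j" if "i \<in> {1..N}" "j \<in> {1..N}" "x - a *s p \<in> Sg i" "x - a *s p \<in> Sg j" for i j a
    proof (rule ccontr)
      assume "i \<noteq> j"
      then have "Sg i \<inter> Sg j = {0}" using dis iN that(1,2) by blast
      then show False using that(3,4) nz[of a] by blast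
    qed
    have inj: "inj f"
    proof (rule injI, rule ccontr)
      fix a b assume fab: "f a = f b" and ab: "a \<noteq> b"
      have S: "vec.subspace (Sg (f a))" using Ssub iN f by blast
      have "(x - b *s p) - (x - a *s p) \<in> Sg (f a)"
        using f[of a] f[of b] fab vec.subspace_diff[OF S] by metis
      moreover have "(x - b *s p) - (x - a *s p) = (a - b) *s p" by (simp add: vec_eq_iff algebra_simps)
      ultimately have "(a - b) *s p \<in> Sg (f a)" by simp
      then have "inverse (a - b) *s ((a - b) *s p) \<in> Sg (f a)" using vec.subspace_scale[OF S] by blast
      moreover have "inverse (a - b) *s ((a - b) *s p) = p"
      proof -
        have "inverse (a - b) * (a - b) = 1" using ab by simp
        then show ?thesis by (simp only: vec.scale_scale vec.scale_one)
      qed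
      ultimately show False using pnot f by metis
    qed
    have img: "f ` UNIV = {i\<in>{1..N}. x \<in> Pis i}"
    proof
      show "f ` UNIV \<subseteq> {i\<in>{1..N}. x \<in> Pis i}"
        using f memPis iN x(2) by blast
      show "{i\<in>{1..N}. x \<in> Pis i} \<subseteq> f ` UNIV"
      proof
        fix i assume i: "i \<in> {i\<in>{1..N}. x \<in> Pis i}"
        then obtain k where k: "x - k *s p \<in> Sg i" using memPis iN by blast
        have "f k = i" using uniq[OF f(1) _ f(2) k] i by blast
        then show "i \<in> f ` UNIV" by blast
      qed
    qed
    have "card (f ` UNIV) = card (UNIV::'a set)" using inj by (simp add: card_image)
    then show ?thesis using img by simp
  qed
  show ?thesis
  proof (intro conjI impI allI ballI)
    show "vec.dim (Pis i \<inter> Pis j) \<le> 1" if "i \<in> {1..N}" "j \<in> {1..N}" "i \<noteq> j" for i j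
      using partI that by blast
    show "vec.dim (Pis i \<inter> Pis j) = 1" if "e = 0 \<and> r mod 4 = 1" "i \<in> {1..N}" "j \<in> {1..N}" "i \<noteq> j" for i j
      using partII that by blast
    show "card {i\<in>{1..N}. x \<in> Pis i} = CARD('a)"
      if "x \<noteq> 0 \<and> x \<in> H \<and> qform c x = 0 \<and> x \<notin> Sg (N + 1)" for x
      using partIII that by blast
  qed

qed


end
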